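(* Let $L>n\ge 0$ and let $q(x)\in\mathrm{GF}(2)[x]/(x^L+1)$ be nonzero, represented as a polynomial of degree exactly $n$. Fix any set $S$ of $n$ bit positions that are consecutive modulo $L$, i.e. $S=\{k \bmod L, (k+1)\bmod L,\dots,(k+n-1)\bmod L\}$ for some integer $k$. Then for every $y\in\mathrm{GF}(2)[x]/(x^L+1)$, the number of $w\in\mathrm{GF}(2)[x]/(x^L+1)$ such that $q(x)w\bmod (x^L+1)$ and $y$ agree in every bit position outside $S$ is exactly $2^n$. (In particular this holds for $S=\{0,1,\dots,n-1\}$, the first $n$ bits.)
   Context: Elements of $\mathrm{GF}(2)[x]/(x^L+1)$ are identified with polynomials $\sum_{i=0}^{L-1}c_ix^i$ over $\mathrm{GF}(2)$; bit position $i$ refers to the coefficient $c_i$ of $x^i$. Two elements are "equal modulo the positions in $S$" if their coefficients agree at every position not in $S$. *)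

theory Defs
  imports "HOL-Library.Z2" "HOL-Computational_Algebra.Polynomial"
begin

text \<open>GF(2) is the type bit. Elements of GF(2)[x]/(x^L+1) are represented by
  their canonical representatives: polynomials over GF(2) of degree < L.\<close>

definition cyc_modulus :: "nat \<Rightarrow> bit poly" where
  "cyc_modulus L = monom 1 L + 1"

definition cyc_elems :: "nat \<Rightarrow> bit poly set" where
  "cyc_elems L = {p. degree p < L}"

definition cyc_mult :: "nat \<Rightarrow> bit poly \<Rightarrow> bit poly \<Rightarrow> bit poly" where
  "cyc_mult L a b = (a * b) mod cyc_modulus L"

definition eq_outside :: "nat \<Rightarrow> nat set \<Rightarrow> bit poly \<Rightarrow> bit poly \<Rightarrow> bool" where
  "eq_outside L S a b \<longleftrightarrow> (\<forall>i<L. i \<notin> S \<longrightarrow> coeff a i = coeff b i)"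

definition consec_positions :: "nat \<Rightarrow> int \<Rightarrow> nat \<Rightarrow> nat set" where
  "consec_positions L k n = (\<lambda>j. nat ((k + int j) mod int L)) ` {0..<n}"

end

theory Submission
  imports Defs
begin

definition Bnd :: "nat \<Rightarrow> bit poly set" where
  "Bnd N = {p. \<forall>i\<ge>N. coeff p i = 0}"

lemma UNIV_bit: "(UNIV :: bit set) = {0, 1}"
  by (auto intro: bit.exhaust)

lemma card_UNIV_bit: "card (UNIV :: bit set) = 2"
  by (simp add: UNIV_bit)

lemma bij_Bnd: "bij_betw (\<lambda>p. map (coeff p) [0..<N]) (Bnd N) {xs. set xs \<subseteq> UNIV \<and> length xs = N}"
proof (rule bij_betw_byWitness[where f' = Poly])
  show "\<forall>a\<in>Bnd N. Poly (map (coeff a) [0..<N]) = a"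
    by (auto simp: Bnd_def poly_eq_iff nth_default_def)
  show "\<forall>a'\<in>{xs. set xs \<subseteq> UNIV \<and> length xs = N}. map (coeff (Poly a')) [0..<N] = a'"
    by (auto simp: nth_default_def intro!: nth_equalityI)
  show "(\<lambda>p. map (coeff p) [0..<N]) ` Bnd N \<subseteq> {xs. set xs \<subseteq> UNIV \<and> length xs = N}" by auto
  show "Poly ` {xs. set xs \<subseteq> UNIV \<and> length xs = N} \<subseteq> Bnd N"
    by (auto simp: Bnd_def nth_default_def)
qed

lemma card_Bnd: "card (Bnd N) = 2 ^ N"
proof -
  have "finite (UNIV::bit set)" by (simp add: UNIV_bit)
  then show ?thesis
  using bij_betw_same_card[OF bij_Bnd[of N]] card_lists_length_eq[of "UNIV::bit set" N]
  by (simp add: card_UNIV_bit)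
qed

lemma finite_Bnd: "finite (Bnd N)"
  using card_Bnd[of N] card_eq_0_iff by fastforce

lemma cyc_elems_Bnd: "0 < L \<Longrightarrow> cyc_elems L = Bnd L"
proof -
  assume L: "0 < L"
  have "degree p < L \<longleftrightarrow> (\<forall>i\<ge>L. coeff p i = 0)" for p :: "bit poly"
  proof
    assume "degree p < L" then show "\<forall>i\<ge>L. coeff p i = 0" by (auto simp: coeff_eq_0)
  next
    assume a: "\<forall>i\<ge>L. coeff p i = 0"
    have "degree p \<le> L - 1" by (rule degree_le) (use a in auto)
    then show "degree p < L" using L by linarith
  qed
  then show ?thesis unfolding cyc_elems_def Bnd_def by simp
qed

lemma deg_m: "0 < L \<Longrightarrow> degree (cyc_modulus L) = L"
  unfolding cyc_modulus_def
  by (simp add: degree_add_eq_left degree_monom_eq)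

lemma m_nz: "0 < L \<Longrightarrow> cyc_modulus L \<noteq> 0"
proof
  assume "0 < L" "cyc_modulus L = 0"
  then show False using deg_m[of L] by simp
qed

lemma mod_in_Bnd: "0 < L \<Longrightarrow> p mod cyc_modulus L \<in> Bnd L"
proof -
  assume L: "0 < L"
  have "p mod cyc_modulus L = 0 \<or> degree (p mod cyc_modulus L) < L"
    using degree_mod_less[OF m_nz[OF L], of p] deg_m[OF L] by simp
  then have "degree (p mod cyc_modulus L) < L" using L by auto
  then have "p mod cyc_modulus L \<in> cyc_elems L" by (simp add: cyc_elems_def)
  then show ?thesis using cyc_elems_Bnd[OF L] by simp
qed

lemma mod_id: "0 < L \<Longrightarrow> p \<in> Bnd L \<Longrightarrow> p mod cyc_modulus L = p"
proof -
  assume L: "0 < L" and p: "p \<in> Bnd L"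
  then have "p \<in> cyc_elems L" using cyc_elems_Bnd[OF L] by simp
  then have "degree p < degree (cyc_modulus L)" using deg_m[OF L] by (simp add: cyc_elems_def)
  then show ?thesis by (rule mod_poly_less)
qed

lemma Bnd_degree: "d \<in> Bnd N \<Longrightarrow> d \<noteq> 0 \<Longrightarrow> degree d < N"
proof (rule ccontr)
  assume a: "d \<in> Bnd N" "d \<noteq> 0" "\<not> degree d < N"
  then have "coeff d (degree d) = 0" by (simp add: Bnd_def)
  then show False using a(2) by simp
qed

lemma Bnd_mult: "q \<noteq> 0 \<Longrightarrow> degree q = n \<Longrightarrow> d \<in> Bnd N \<Longrightarrow> N + n = L \<Longrightarrow> q * d \<in> Bnd L"
proof (cases "d = 0")
  case False
  assume a: "q \<noteq> 0" "degree q = n" "d \<in> Bnd N" "N + n = L"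
  then have "degree (q*d) < L" using Bnd_degree[OF a(3) False] False
    by (simp add: degree_mult_eq)
  then show ?thesis unfolding Bnd_def by (auto simp: coeff_eq_0)
qed (simp add: Bnd_def)

lemma key:
  assumes "q \<noteq> 0" "degree q = n" "d \<in> Bnd N" "N + n = L"
    "\<forall>i. n \<le> i \<longrightarrow> i < L \<longrightarrow> coeff (q*d) i = 0"
  shows "d = 0"
proof (rule ccontr)
  assume d: "d \<noteq> 0"
  have dd: "degree d < N" using Bnd_degree[OF assms(3) d] .
  have deg: "degree (q*d) = n + degree d" using assms d by (simp add: degree_mult_eq)
  have "q * d \<noteq> 0" using assms d by simp
  then have "coeff (q*d) (degree (q*d)) \<noteq> 0" by simp
  then have "coeff (q*d) (n + degree d) \<noteq> 0" using deg by simp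
  moreover have "n + degree d < L" using dd assms by simp
  ultimately show False using assms(5) by auto
qed

lemma fiber0:
  assumes L: "n < L" and q: "q \<noteq> 0" "degree q = n" and y: "y \<in> Bnd L"
  shows "card {w \<in> Bnd L. \<forall>i<L. n \<le> i \<longrightarrow> coeff (q*w mod cyc_modulus L) i = coeff y i} = 2 ^ n"
    (is "card ?F = _")
proof -
  define N where "N = L - n"
  define m where "m = cyc_modulus L"
  have L0: "0 < L" using L by simp
  have NL: "N + n = L" using L N_def by simp
  have qB: "\<And>d. d \<in> Bnd N \<Longrightarrow> q * d \<in> Bnd L" using Bnd_mult[OF q _ NL] by blast
  have modid: "\<And>p. p \<in> Bnd L \<Longrightarrow> p mod m = p" using mod_id[OF L0] m_def by simp
  define A where "A u = poly_cutoff N (poly_shift n (q*u))" for u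
  have cA: "coeff (A u) (i - n) = coeff (q*u) i" if "n \<le> i" "i < L" for u i
    using that NL by (simp add: A_def coeff_poly_cutoff coeff_poly_shift)
  have AB: "A ` Bnd N \<subseteq> Bnd N" by (auto simp: A_def Bnd_def coeff_poly_cutoff)
  have Ainj: "inj_on A (Bnd N)"
  proof (rule inj_onI)
    fix u1 u2 assume u: "u1 \<in> Bnd N" "u2 \<in> Bnd N" "A u1 = A u2"
    have "u1 - u2 \<in> Bnd N" using u by (simp add: Bnd_def)
    moreover have "\<forall>i. n \<le> i \<longrightarrow> i < L \<longrightarrow> coeff (q*(u1 - u2)) i = 0"
    proof (intro allI impI)
      fix i assume i: "n \<le> i" "i < L"
      have "coeff (q*(u1 - u2)) i = coeff (q*u1) i - coeff (q*u2) i"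
        by (simp add: right_diff_distrib)
      also have "\<dots> = coeff (A u1) (i - n) - coeff (A u2) (i - n)" using cA[OF i] by simp
      finally show "coeff (q*(u1 - u2)) i = 0" using u(3) by simp
    qed
    ultimately have "u1 - u2 = 0" using key[OF q _ NL] by blast
    then show "u1 = u2" by simp
  qed
  have Asurj: "A ` Bnd N = Bnd N" using endo_inj_surj[OF finite_Bnd AB Ainj] .
  have "bij_betw (poly_shift N) ?F (Bnd n)"
  proof (rule bij_betw_imageI)
    show "inj_on (poly_shift N) ?F"
    proof (rule inj_onI)
      fix w1 w2 assume w: "w1 \<in> ?F" "w2 \<in> ?F" "poly_shift N w1 = poly_shift N w2"
      define d where "d = w1 - w2"
      have dB: "d \<in> Bnd N"
        unfolding Bnd_def
      proof (intro CollectI allI impI)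
        fix i assume i: "N \<le> i"
        have "coeff (poly_shift N w1) (i - N) = coeff (poly_shift N w2) (i - N)" using w(3) by simp
        then show "coeff d i = 0" using i by (simp add: d_def coeff_poly_shift)
      qed
      have "q * d \<in> Bnd L" using qB dB .
      then have "q * d = (q * d) mod m" using modid by simp
      also have "\<dots> = q*w1 mod m - q*w2 mod m"
        by (simp only: d_def right_diff_distrib poly_mod_diff_left)
      finally have "q * d = q*w1 mod m - q*w2 mod m" .
      then have "\<forall>i. n \<le> i \<longrightarrow> i < L \<longrightarrow> coeff (q*d) i = 0"
        using w(1,2) m_def by auto
      then have "d = 0" using key[OF q dB NL] by blast
      then show "w1 = w2" by (simp add: d_def)
    qed
    show "poly_shift N ` ?F = Bnd n"
    proof
      show "poly_shift N ` ?F \<subseteq> Bnd n"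
        using NL by (auto simp: Bnd_def coeff_poly_shift)
    next
      show "Bnd n \<subseteq> poly_shift N ` ?F"
      proof
        fix h assume h: "h \<in> Bnd n"
        define z where "z = (q * (monom 1 N * h)) mod m"
        define t where "t = poly_cutoff N (poly_shift n (y - z))"
        have "t \<in> Bnd N" by (simp add: t_def Bnd_def coeff_poly_cutoff)
        then have "t \<in> A ` Bnd N" using Asurj by simp
        then obtain u where u: "u \<in> Bnd N" "A u = t" by (elim imageE) simp
        define w where "w = u + monom 1 N * h"
        have wB: "w \<in> Bnd L"
          unfolding Bnd_def
        proof (intro CollectI allI impI)
          fix i assume i: "L \<le> i"
          have "coeff u i = 0" using u(1) i NL by (simp add: Bnd_def)
          moreover have "coeff h (i - N) = 0" using h i NL by (simp add: Bnd_def)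
          ultimately show "coeff w i = 0" using i NL by (simp add: w_def coeff_monom_mult)
        qed
        have sh: "poly_shift N w = h"
        proof (rule poly_eqI)
          fix i
          have "coeff u (i + N) = 0" using u(1) by (simp add: Bnd_def)
          then show "coeff (poly_shift N w) i = coeff h i"
            by (simp add: w_def coeff_poly_shift coeff_monom_mult)
        qed
        have "q * w mod m = (q * u) mod m + z"
          by (simp only: w_def z_def distrib_left poly_mod_add_left)
        then have qw: "q * w mod m = q * u + z"
          using modid[OF qB[OF u(1)]] by simp
        have "coeff (q*w mod m) i = coeff y i" if "n \<le> i" "i < L" for i
        proof -
          have "coeff (q*u) i = coeff t (i - n)" using cA[OF that, of u] u(2) by simp
          also have "\<dots> = coeff y i - coeff z i" using that NL
            by (simp add: t_def coeff_poly_cutoff coeff_poly_shift)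
          finally have e: "coeff (q*u) i = coeff y i - coeff z i" .
          have "coeff (q*w mod m) i = coeff (q*u) i + coeff z i" by (simp only: qw coeff_add)
          also have "\<dots> = coeff y i" by (simp only: e diff_add_cancel)
          finally show ?thesis .
        qed
        then have "w \<in> ?F" using wB m_def by auto
        then show "h \<in> poly_shift N ` ?F" using sh by blast
      qed
    qed
  qed
  then have "card ?F = card (Bnd n)" by (rule bij_betw_same_card)
  then show ?thesis using card_Bnd by simp
qed


definition rot :: "nat \<Rightarrow> nat \<Rightarrow> bit poly \<Rightarrow> bit poly" where
  "rot L s p = (monom 1 s * p) mod cyc_modulus L"

lemma one_one_bitpoly: "(1::bit poly) + 1 = 0"
proof (rule poly_eqI)
  fix n
  have "coeff 1 n + coeff 1 n = (0::bit)" by (cases "coeff (1::bit poly) n") simp_all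
  then show "coeff (1 + 1) n = coeff (0::bit poly) n" by (simp only: coeff_add coeff_0)
qed

lemma xL_mod: "(monom 1 L * z) mod cyc_modulus L = z mod cyc_modulus L"
proof -
  have "monom 1 L = cyc_modulus L + 1"
    by (simp only: cyc_modulus_def add.assoc one_one_bitpoly add_0_right)
  then have "monom 1 L * z = z + z * cyc_modulus L" by (simp add: algebra_simps)
  then show ?thesis by simp
qed

lemma rot_in: "0 < L \<Longrightarrow> rot L s p \<in> Bnd L"
  by (simp add: rot_def mod_in_Bnd)

lemma rot_rot: "0 < L \<Longrightarrow> s + s' = L \<Longrightarrow> p \<in> Bnd L \<Longrightarrow> rot L s (rot L s' p) = p"
proof -
  assume a: "0 < L" "s + s' = L" "p \<in> Bnd L"
  have "rot L s (rot L s' p) = (monom 1 s * (monom 1 s' * p)) mod cyc_modulus L"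
    by (simp add: rot_def mod_mult_right_eq)
  also have "\<dots> = (monom 1 L * p) mod cyc_modulus L"
    using a(2) by (simp add: mult.assoc[symmetric] mult_monom)
  also have "\<dots> = p" using xL_mod mod_id[OF a(1) a(3)] by simp
  finally show ?thesis .
qed

lemma rot_mult: "rot L s (q * w mod cyc_modulus L) = q * rot L s w mod cyc_modulus L"
proof -
  have "rot L s (q * w mod cyc_modulus L) = (monom 1 s * (q * w)) mod cyc_modulus L"
    by (simp add: rot_def mod_mult_right_eq)
  also have "\<dots> = (q * (monom 1 s * w)) mod cyc_modulus L" by (simp add: ac_simps)
  also have "\<dots> = q * rot L s w mod cyc_modulus L"
    by (simp add: rot_def mod_mult_right_eq)
  finally show ?thesis .
qed

lemma rot_coeff:
  assumes L: "0 < L" and s: "s \<le> L" and p: "p \<in> Bnd L" and i: "i < L"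
  shows "coeff (rot L s p) i = coeff p ((i + (L - s)) mod L)"
proof -
  define c where "c = poly_cutoff (L - s) p"
  define h where "h = poly_shift (L - s) p"
  have pe: "p = c + monom 1 (L - s) * h"
    by (rule poly_eqI) (simp add: c_def h_def coeff_poly_cutoff coeff_poly_shift coeff_monom_mult)
  have "monom 1 s * p = monom 1 s * c + monom 1 L * h"
    using s by (subst pe) (simp add: distrib_left mult.assoc[symmetric] mult_monom)
  then have "rot L s p = (monom 1 s * c) mod cyc_modulus L + (monom 1 L * h) mod cyc_modulus L"
    by (simp add: rot_def poly_mod_add_left)
  also have "\<dots> = monom 1 s * c + h"
  proof -
    have "monom 1 s * c \<in> Bnd L" using s
      by (auto simp: Bnd_def coeff_monom_mult c_def coeff_poly_cutoff)
    moreover have "h \<in> Bnd L" using p by (auto simp: Bnd_def h_def coeff_poly_shift)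
    ultimately show ?thesis using xL_mod mod_id[OF L] by simp
  qed
  finally have r: "rot L s p = monom 1 s * c + h" .
  show ?thesis
  proof (cases "i < s")
    case True
    then have "(i + (L - s)) mod L = i + (L - s)" using s i by simp
    then show ?thesis using True by (simp add: r coeff_monom_mult h_def coeff_poly_shift)
  next
    case False
    then have m: "(i + (L - s)) mod L = i - s" using s i
      by (simp add: mod_if)
    have "coeff p (i + (L - s)) = 0" using p False s by (simp add: Bnd_def)
    moreover have "i - s < L - s" using False i by linarith
    ultimately show ?thesis using False m s i
      by (simp add: r coeff_monom_mult h_def c_def coeff_poly_shift coeff_poly_cutoff)
  qed
qed

lemma consec_iff:
  assumes "0 < L" "r = nat (k mod int L)"
  shows "consec_positions L k n = (\<lambda>j. (r + j) mod L) ` {0..<n}"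
proof -
  have "nat ((k + int j) mod int L) = (r + j) mod L" for j
  proof -
    have "(k + int j) mod int L = (k mod int L + int j) mod int L" by (simp add: mod_add_left_eq)
    also have "k mod int L = int r" using assms by simp
    finally have "(k + int j) mod int L = int ((r + j) mod L)" by (simp add: of_nat_mod)
    then show ?thesis by simp
  qed
  then show ?thesis unfolding consec_positions_def by simp
qed

lemma mod2: "(a::nat) < 2 * L \<Longrightarrow> a mod L = (if a < L then a else a - L)"
proof (cases "a < L")
  case False
  assume "a < 2 * L"
  then have "a - L < L" using False by linarith
  then show ?thesis using False by (simp add: le_mod_geq)
qed simp

lemma pos_iff:
  fixes n L r i :: nat
  assumes "n < L" "r < L" "i < L"
  shows "n \<le> i \<longleftrightarrow> (i + r) mod L \<notin> (\<lambda>j. (r + j) mod L) ` {0..<n}"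
proof
  assume ni: "n \<le> i"
  show "(i + r) mod L \<notin> (\<lambda>j. (r + j) mod L) ` {0..<n}"
  proof
    assume "(i + r) mod L \<in> (\<lambda>j. (r + j) mod L) ` {0..<n}"
    then obtain j where j: "j < n" "(i + r) mod L = (r + j) mod L" by auto
    have "i + r < 2 * L" "r + j < 2 * L" using j assms by linarith+
    then show False using j ni assms mod2[of "i + r" L] mod2[of "r + j" L]
      by (auto split: if_splits)
  qed
next
  assume "(i + r) mod L \<notin> (\<lambda>j. (r + j) mod L) ` {0..<n}"
  moreover have "i < n \<Longrightarrow> (i + r) mod L \<in> (\<lambda>j. (r + j) mod L) ` {0..<n}"
    by (rule image_eqI[where x = i]) (simp_all add: add.commute)
  ultimately show "n \<le> i" by linarith
qed


lemma eq_outside_rot: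
  assumes L: "n < L" and r: "r < L" and s: "s + r = L"
    and a: "a \<in> Bnd L" and b: "b \<in> Bnd L"
  shows "eq_outside L ((\<lambda>j. (r + j) mod L) ` {0..<n}) a b \<longleftrightarrow>
     (\<forall>i<L. n \<le> i \<longrightarrow> coeff (rot L s a) i = coeff (rot L s b) i)"
    (is "eq_outside L ?S a b \<longleftrightarrow> _")
proof -
  have L0: "0 < L" using L by simp
  have sL: "s \<le> L" "L - s = r" using s by auto
  have ca: "coeff (rot L s p) i = coeff p ((i + r) mod L)" if "p \<in> Bnd L" "i < L" for p i
    using rot_coeff[OF L0 sL(1) that] sL(2) by simp
  show ?thesis
  proof
    assume e: "eq_outside L ?S a b"
    show "\<forall>i<L. n \<le> i \<longrightarrow> coeff (rot L s a) i = coeff (rot L s b) i"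
    proof (intro allI impI)
      fix i assume i: "i < L" "n \<le> i"
      have "(i + r) mod L \<notin> ?S" using pos_iff[OF L r i(1)] i(2) by simp
      moreover have "(i + r) mod L < L" using L0 by simp
      ultimately have "coeff a ((i + r) mod L) = coeff b ((i + r) mod L)"
        using e unfolding eq_outside_def by blast
      then show "coeff (rot L s a) i = coeff (rot L s b) i" using ca a b i by simp
    qed
  next
    assume e: "\<forall>i<L. n \<le> i \<longrightarrow> coeff (rot L s a) i = coeff (rot L s b) i"
    show "eq_outside L ?S a b"
      unfolding eq_outside_def
    proof (intro allI impI)
      fix i assume i: "i < L" "i \<notin> ?S"
      define i' where "i' = (i + s) mod L"
      have i'L: "i' < L" using L0 by (simp add: i'_def)
      have "(i' + r) mod L = (i + s + r) mod L" by (simp add: i'_def mod_add_left_eq)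
      also have "\<dots> = i" using s i(1) by (simp add: add.assoc)
      finally have ii: "(i' + r) mod L = i" .
      have "n \<le> i'" using pos_iff[OF L r i'L] ii i(2) by simp
      then have "coeff (rot L s a) i' = coeff (rot L s b) i'" using e i'L by blast
      then show "coeff a i = coeff b i" using ca[OF a i'L] ca[OF b i'L] ii by simp
    qed
  qed
qed

theorem mainTheorem6:
  fixes L n :: nat and k :: int and q y :: "bit poly"
  assumes "n < L"
    and "q \<in> cyc_elems L" and "q \<noteq> 0" and "degree q = n"
    and "y \<in> cyc_elems L"
  shows "card {w \<in> cyc_elems L.
           eq_outside L (consec_positions L k n) (cyc_mult L q w) y} = 2 ^ n"
proof -
  have L0: "0 < L" using assms by simp
  define m where "m = cyc_modulus L"
  define r where "r = nat (k mod int L)"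
  define s where "s = L - r"
  have "k mod int L < int L" "0 \<le> k mod int L" using L0 by simp_all
  then have rL: "r < L" unfolding r_def by (simp add: nat_less_iff)
  have sr: "s + r = L" "r + s = L" using rL s_def by auto
  have E: "cyc_elems L = Bnd L" using cyc_elems_Bnd[OF L0] .
  have yB: "y \<in> Bnd L" using assms E by simp
  have S: "consec_positions L k n = (\<lambda>j. (r + j) mod L) ` {0..<n}"
    using consec_iff[OF L0 r_def] .
  let ?Fk = "{w \<in> cyc_elems L. eq_outside L (consec_positions L k n) (cyc_mult L q w) y}"
  let ?F0 = "{w \<in> Bnd L. \<forall>i<L. n \<le> i \<longrightarrow> coeff (q*w mod cyc_modulus L) i = coeff (rot L s y) i}"
  have mem: "w \<in> ?Fk \<longleftrightarrow> w \<in> Bnd L \<and> rot L s w \<in> ?F0" for w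
  proof -
    have "w \<in> ?Fk \<longleftrightarrow> w \<in> Bnd L \<and> eq_outside L ((\<lambda>j. (r + j) mod L) ` {0..<n}) (q * w mod cyc_modulus L) y"
      using E S by (simp add: cyc_mult_def)
    also have "\<dots> \<longleftrightarrow> w \<in> Bnd L \<and> (\<forall>i<L. n \<le> i \<longrightarrow> coeff (rot L s (q * w mod cyc_modulus L)) i = coeff (rot L s y) i)"
      using eq_outside_rot[OF assms(1) rL sr(1) mod_in_Bnd[OF L0] yB] by blast
    also have "\<dots> \<longleftrightarrow> w \<in> Bnd L \<and> rot L s w \<in> ?F0"
      using rot_in[OF L0] by (simp add: rot_mult)
    finally show ?thesis .
  qed
  have "bij_betw (rot L s) ?Fk ?F0"
  proof (rule bij_betw_byWitness[where f' = "rot L r"])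
    show "\<forall>a\<in>?Fk. rot L r (rot L s a) = a" using mem rot_rot[OF L0 sr(2)] by blast
    show "\<forall>a\<in>?F0. rot L s (rot L r a) = a" using rot_rot[OF L0 sr(1)] by blast
    show "rot L s ` ?Fk \<subseteq> ?F0" using mem by blast
    show "rot L r ` ?F0 \<subseteq> ?Fk"
    proof
      fix x assume "x \<in> rot L r ` ?F0"
      then obtain a where a: "a \<in> ?F0" "x = rot L r a" by blast
      have "rot L s x = a" using a rot_rot[OF L0 sr(1)] by blast
      then show "x \<in> ?Fk" using mem a rot_in[OF L0] by auto
    qed
  qed
  then have "card ?Fk = card ?F0" by (rule bij_betw_same_card)
  also have "\<dots> = 2 ^ n"
    using fiber0[OF assms(1) assms(3) assms(4) rot_in[OF L0]] .
  finally show ?thesis .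
qed

end
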